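(* For every $\beta>1$, the set $\mathrm{Per}(\sigma|_{X_\beta})$ of all periodic points of the $\beta$-shift $X_\beta$ is strongly linkable.
   Context: Shift: for an alphabet $\mathcal A=\{0,1,\dots,r-1\}$, $\mathcal A^{\mathbb N}$ carries the metric $\rho(x,y)=2^{-\min\{k:x_k\ne y_k\}}$ for $x\ne y$, and $\sigma((\omega_i)_i)=(\omega_{i+1})_i$. $\beta$-shift: fix $\beta>1$, $T_\beta(x)=\beta x\bmod1$. The $\beta$-expansion of $1$ is $d_\beta=(d_j)_{j\ge1}$ with $d_j=\lfloor\beta T_\beta^{j-1}(1)\rfloor$. If $d_\beta$ ends in $0^\infty$ with last nonzero digit $d_k$, set $\widehat d_\beta=(d_1\dots d_{k-1}(d_k-1))^\infty$; otherwise $\widehat d_\beta=d_\beta$. The $\beta$-shift $X_\beta\subset\{0,\dots,\lfloor\beta\rfloor\}^{\mathbb N}$ is the closure of the set of sequences $b$ with $\sigma^k(b)\prec\widehat d_\beta$ (lexicographic order) for all $k\ge0$. $B(x,n,\varepsilon)=\{y:\rho(\sigma^jy,\sigma^jx)<\varepsilon,\ 0\le j<n\}$. A set $K$ of periodic points is strongly linkable if for all $y_1,y_2\in K$ and $\varepsilon>0$ there is $N=N(y_1,y_2,\varepsilon)$ such that for all integers $p_1,p_2\ge N$ with $\sigma^{p_j}y_j=y_j$ ($j=1,2$) there exist $z\in K$ and integers $q_1\le q_2$ with $\sigma^{q_2}z=z$, $p_1\le q_1\le(1+\varepsilon)p_1$, $z\in B(y_1,p_1,\varepsilon)$, $p_2\le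 q_2-q_1\le(1+\varepsilon)p_2$ and $\sigma^{q_1}z\in B(y_2,p_2,\varepsilon)$. *)

theory Defs
  imports Complex_Main
begin

type_synonym seq = "nat \<Rightarrow> nat"

definition shift :: "seq \<Rightarrow> seq" where
  "shift w = (\<lambda>i. w (Suc i))"

definition rho :: "seq \<Rightarrow> seq \<Rightarrow> real" where
  "rho x y = (if x = y then 0 else 2 powr (- real (LEAST k. x k \<noteq> y k)))"

definition bowen_ball :: "seq \<Rightarrow> nat \<Rightarrow> real \<Rightarrow> seq set" where
  "bowen_ball x n eps = {y. \<forall>j<n. rho ((shift ^^ j) y) ((shift ^^ j) x) < eps}"

definition lex_less :: "seq \<Rightarrow> seq \<Rightarrow> bool" where
  "lex_less a b \<longleftrightarrow> (\<exists>k. (\<forall>i<k. a i = b i) \<and> a k < b k)"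

definition beta_map :: "real \<Rightarrow> real \<Rightarrow> real" where
  "beta_map \<beta> x = \<beta> * x - of_int \<lfloor>\<beta> * x\<rfloor>"

text \<open>beta-expansion of 1, 0-indexed: beta_exp1 b j is d_(j+1) = floor(beta T^j(1)).\<close>
definition beta_exp1 :: "real \<Rightarrow> seq" where
  "beta_exp1 \<beta> j = nat \<lfloor>\<beta> * (beta_map \<beta> ^^ j) 1\<rfloor>"

text \<open>The modified expansion hat d_beta. If d ends in 0^infinity with last nonzero
  digit at (0-based) position m, hat d = (d_0 ... d_(m-1) (d_m - 1))^infinity.\<close>
definition beta_exp1_hat :: "real \<Rightarrow> seq" where
  "beta_exp1_hat \<beta> =
    (let d = beta_exp1 \<beta> in
     if (\<exists>k. \<forall>j\<ge>k. d j = 0) \<and> (\<exists>j. d j \<noteq> 0) then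
       (let m = (GREATEST j. d j \<noteq> 0) in
        (\<lambda>i. if i mod (Suc m) = m then d m - 1 else d (i mod (Suc m))))
     else d)"

text \<open>The beta-shift: closure (in the metric rho) of the set of sequences over
  {0..floor beta} all of whose shifts are lexicographically below hat d_beta.\<close>
definition beta_shift_base :: "real \<Rightarrow> seq set" where
  "beta_shift_base \<beta> =
    {b. (\<forall>i. b i \<le> nat \<lfloor>\<beta>\<rfloor>) \<and> (\<forall>k. lex_less ((shift ^^ k) b) (beta_exp1_hat \<beta>))}"

definition beta_shift :: "real \<Rightarrow> seq set" where
  "beta_shift \<beta> = {x. \<forall>e>0. \<exists>b\<in>beta_shift_base \<beta>. rho x b < e}"

definition per_points :: "seq set \<Rightarrow> seq set" where
  "per_points X = {x \<in> X. \<exists>p>0. (shift ^^ p) x = x}"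

definition strongly_linkable :: "seq set \<Rightarrow> bool" where
  "strongly_linkable K \<longleftrightarrow>
    (\<forall>y1\<in>K. \<forall>y2\<in>K. \<forall>eps>0. \<exists>N::nat. \<forall>p1 p2::nat.
       p1 \<ge> N \<and> p2 \<ge> N \<and> (shift ^^ p1) y1 = y1 \<and> (shift ^^ p2) y2 = y2 \<longrightarrow>
       (\<exists>z\<in>K. \<exists>q1 q2::nat. q1 \<le> q2 \<and> (shift ^^ q2) z = z \<and>
          p1 \<le> q1 \<and> real q1 \<le> (1 + eps) * real p1 \<and>
          z \<in> bowen_ball y1 p1 eps \<and>
          p2 \<le> q2 - q1 \<and> real (q2 - q1) \<le> (1 + eps) * real p2 \<and>
          (shift ^^ q1) z \<in> bowen_ball y2 p2 eps))"

end

theory Submission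
  imports Defs
begin

lemma shift_pow: "(shift ^^ k) z = (\<lambda>i. z (i + k))"
  by (induction k arbitrary: z) (auto simp: shift_def funpow_Suc_right)

lemma periodic_add: assumes "(shift ^^ P) y = y" shows "y (n + P * q) = y n"
proof (induction q)
  case (Suc q)
  have "y (n + P * q + P) = y (n + P*q)"
    using fun_cong[OF assms, of "n + P*q"] by (simp add: shift_pow)
  then show ?case using Suc by (simp add: algebra_simps)
qed simp

lemma periodic_nonzero:
  assumes "(shift ^^ P) y = y" "P > 0" "y k \<noteq> 0"
  shows "\<exists>j<P. y (a + j) \<noteq> 0"
proof -
  define t where "t = k + P * a"
  have "a \<le> t" using assms(2) by (simp add: t_def) (metis mult.commute le_add2 mult_le_mono2 Suc_leI mult_1_right trans_le_add2 le_trans nat_mult_1 One_nat_def)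
  have yt: "y t = y k" unfolding t_def by (rule periodic_add[OF assms(1)])
  define r where "r = (t - a) mod P"
  define q where "q = (t - a) div P"
  have "t = a + r + P * q" using \<open>a \<le> t\<close> unfolding r_def q_def
    by (metis add.commute add.left_commute le_add_diff_inverse mod_mult_div_eq)
  hence "y (a + r) = y t" using periodic_add[OF assms(1), of "a+r" q] by simp
  moreover have "r < P" using assms(2) by (simp add: r_def)
  ultimately show ?thesis using yt assms(3) by metis
qed

lemma rho_small:
  assumes "\<forall>i\<le>K. x i = y i" "2 powr - real K < e"
  shows "rho x y < e"
proof (cases "x = y")
  case True then show ?thesis using assms(2) by (simp add: rho_def) (smt (verit) powr_gt_zero)
next
  case False
  define L where "L = (LEAST k. x k \<noteq> y k)"
  have ex: "\<exists>k. x k \<noteq> y k" using False by auto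
  have "x L \<noteq> y L" unfolding L_def using LeastI_ex[OF ex] .
  hence "K < L" using assms(1) by (meson not_le)
  hence le: "2 powr - real L \<le> 2 powr - real K" by simp
  have "rho x y = 2 powr - real L" using False by (simp add: rho_def L_def)
  then show ?thesis using le assms(2) by linarith
qed

lemma rho_agree:
  assumes "rho x b < 2 powr - real M" "i \<le> M"
  shows "x i = b i"
proof (cases "x = b")
  case False
  define L where "L = (LEAST k. x k \<noteq> b k)"
  have "2 powr - real L < 2 powr - real M" using assms(1) False by (simp add: rho_def L_def)
  hence "M < L" by simp
  hence "i < L" using assms(2) by simp
  then show ?thesis unfolding L_def using not_less_Least by blast
qed simp

lemma lex_asym: "lex_less a b \<Longrightarrow> \<not> lex_less b a"
  unfolding lex_less_def by (metis linorder_neqE_nat not_less_iff_gr_or_eq)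

lemma closure_props:
  assumes "x \<in> beta_shift \<beta>"
  shows "\<not> lex_less (beta_exp1_hat \<beta>) ((shift ^^ k) x)" "x i \<le> nat \<lfloor>\<beta>\<rfloor>"
proof -
  show "\<not> lex_less (beta_exp1_hat \<beta>) ((shift ^^ k) x)"
  proof
    assume "lex_less (beta_exp1_hat \<beta>) ((shift ^^ k) x)"
    then obtain j where j: "\<forall>i<j. beta_exp1_hat \<beta> i = x (i + k)" "beta_exp1_hat \<beta> j < x (j + k)"
      unfolding lex_less_def shift_pow by auto
    obtain b where b: "b \<in> beta_shift_base \<beta>" "rho x b < 2 powr - real (j + k)"
    proof -
      have "(0::real) < 2 powr - real (j + k)" by simp
      then show ?thesis using assms that unfolding beta_shift_def by blast
    qed
    have ag: "\<And>i. i \<le> j + k \<Longrightarrow> x i = b i" using rho_agree[OF b(2)] by blast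
    have "lex_less (beta_exp1_hat \<beta>) ((shift ^^ k) b)"
      unfolding lex_less_def shift_pow using j ag by (intro exI[of _ j]) auto
    moreover have "lex_less ((shift ^^ k) b) (beta_exp1_hat \<beta>)"
      using b(1) unfolding beta_shift_base_def by auto
    ultimately show False using lex_asym by blast
  qed
  obtain b where b: "b \<in> beta_shift_base \<beta>" "rho x b < 2 powr - real i"
  proof -
    have "(0::real) < 2 powr - real i" by simp
    then show ?thesis using assms that unfolding beta_shift_def by blast
  qed
  have "x i = b i" using rho_agree[OF b(2)] by simp
  then show "x i \<le> nat \<lfloor>\<beta>\<rfloor>" using b(1) unfolding beta_shift_base_def by auto
qed


lemma beta_map_nonneg: "beta_map \<beta> x \<ge> 0"
  unfolding beta_map_def by (simp add: of_int_floor_le)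

lemma T1_zero:
  assumes b: "\<beta> > 1" and z: "\<forall>j\<ge>1. beta_exp1 \<beta> j = 0"
  shows "beta_map \<beta> 1 = 0"
proof -
  define T1 where "T1 = beta_map \<beta> 1"
  have main: "(beta_map \<beta> ^^ Suc j) 1 = \<beta> ^ j * T1 \<and> \<beta> ^ Suc j * T1 < 1" for j
  proof (induction j)
    case 0
    have "beta_exp1 \<beta> 1 = 0" using z by simp
    hence "\<lfloor>\<beta> * T1\<rfloor> \<le> 0" by (simp add: beta_exp1_def T1_def)
    hence "\<beta> * T1 < 1" by linarith
    then show ?case by (simp add: T1_def)
  next
    case (Suc j)
    have e: "beta_exp1 \<beta> (Suc j) = 0" using z by simp
    have f0: "\<lfloor>\<beta> * (\<beta> ^ j * T1)\<rfloor> \<le> 0" using e Suc by (simp add: beta_exp1_def)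
    have "(beta_map \<beta> ^^ Suc j) 1 = beta_map \<beta> ((beta_map \<beta> ^^ j) 1)" by simp
    hence "\<beta> ^ j * T1 = beta_map \<beta> ((beta_map \<beta> ^^ j) 1)" using Suc.IH by simp
    hence "\<beta> ^ j * T1 \<ge> 0" using beta_map_nonneg[of \<beta>] by simp
    moreover have "\<beta> \<ge> 0" using b by simp
    ultimately have "\<beta> * (\<beta> ^ j * T1) \<ge> 0" by simp
    with f0 have fl: "\<lfloor>\<beta> * (\<beta> ^ j * T1)\<rfloor> = 0" by linarith
    have s: "(beta_map \<beta> ^^ Suc (Suc j)) 1 = \<beta> ^ Suc j * T1"
    proof -
      have "(beta_map \<beta> ^^ Suc (Suc j)) 1 = beta_map \<beta> ((beta_map \<beta> ^^ Suc j) 1)"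
        by (simp only: funpow.simps o_apply)
      also have "\<dots> = beta_map \<beta> (\<beta> ^ j * T1)" using Suc.IH by simp
      also have "\<dots> = \<beta> ^ Suc j * T1" using fl by (simp add: beta_map_def)
      finally show ?thesis .
    qed
    have e2: "beta_exp1 \<beta> (Suc (Suc j)) = 0" using z by simp
    hence "\<lfloor>\<beta> * (\<beta> ^ Suc j * T1)\<rfloor> \<le> 0" using s by (simp add: beta_exp1_def del: funpow.simps)
    hence "\<beta> * (\<beta> ^ Suc j * T1) < 1" by linarith
    then show ?case using s by simp
  qed
  show ?thesis
  proof (rule ccontr)
    assume "beta_map \<beta> 1 \<noteq> 0"
    hence pos: "T1 > 0" using beta_map_nonneg[of \<beta> 1] T1_def by simp
    obtain n where "1 / T1 < \<beta> ^ n" using real_arch_pow[OF b] by blast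
    hence a1: "1 < \<beta> ^ n * T1" using pos by (simp add: field_simps)
    have a2: "\<beta> ^ n \<le> \<beta> ^ Suc n" using b by simp
    have "\<beta> ^ n * T1 \<le> \<beta> ^ Suc n * T1" using mult_right_mono[OF a2] pos by simp
    hence "1 < \<beta> ^ Suc n * T1" using a1 by linarith
    then show False using main[of n] by simp
  qed
qed

lemma D0_pos:
  assumes b: "\<beta> > 1"
  shows "beta_exp1_hat \<beta> 0 \<ge> 1"
proof -
  define d where "d = beta_exp1 \<beta>"
  have d0: "d 0 = nat \<lfloor>\<beta>\<rfloor>" by (simp add: d_def beta_exp1_def)
  have d0p: "d 0 \<ge> 1" using d0 b by linarith
  show ?thesis
  proof (cases "(\<exists>k. \<forall>j\<ge>k. d j = 0) \<and> (\<exists>j. d j \<noteq> 0)")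
    case False
    have "beta_exp1_hat \<beta> = d" using False
      by (simp only: beta_exp1_hat_def Let_def d_def[symmetric] if_False)
    then show ?thesis using d0p by simp
  next
    case True
    then obtain k where k: "\<forall>j\<ge>k. d j = 0" by blast
    define m where "m = (GREATEST j. d j \<noteq> 0)"
    have bnd: "\<And>j. d j \<noteq> 0 \<Longrightarrow> j \<le> m"
    proof -
      fix j assume "d j \<noteq> 0"
      moreover have "\<forall>y. d y \<noteq> 0 \<longrightarrow> y \<le> k" using k by (meson nat_le_linear)
      ultimately show "j \<le> m" unfolding m_def by (intro Greatest_le_nat[where b=k]) auto
    qed
    have D: "beta_exp1_hat \<beta> 0 = (if 0 mod (Suc m) = m then d m - 1 else d (0 mod (Suc m)))"
      using True unfolding beta_exp1_hat_def d_def[symmetric] Let_def m_def by simp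
    show ?thesis
    proof (cases "m = 0")
      case False
      then show ?thesis using D d0p by simp
    next
      case True
      have "\<forall>j\<ge>1. beta_exp1 \<beta> j = 0"
      proof (intro allI impI)
        fix j :: nat assume "j \<ge> 1"
        show "beta_exp1 \<beta> j = 0"
        proof (rule ccontr)
          assume "beta_exp1 \<beta> j \<noteq> 0"
          hence "j \<le> m" using bnd d_def by simp
          then show False using True \<open>j \<ge> 1\<close> by simp
        qed
      qed
      from T1_zero[OF b this] have "\<beta> = of_int \<lfloor>\<beta>\<rfloor>" by (simp add: beta_map_def)
      hence "(1::real) < of_int \<lfloor>\<beta>\<rfloor>" using b by linarith
      hence "\<lfloor>\<beta>\<rfloor> \<ge> 2" by simp
      hence "d 0 \<ge> 2" using d0 by linarith
      then show ?thesis using D True by simp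
    qed
  qed
qed


lemma least_ex: "P (i::nat) \<Longrightarrow> \<exists>m. P m \<and> (\<forall>j<m. \<not> P j)"
  using LeastI[of P i] not_less_Least[of _ P] by blast

lemma block_lex:
  fixes D y z :: seq
  assumes D0: "D 0 \<ge> 1" and ady: "\<And>k. \<not> lex_less D ((shift ^^ k) y)"
    and per: "(shift ^^ P) y = y" "P > 0"
    and zy: "\<And>i. i < a \<Longrightarrow> z i = y i" and z0: "\<And>i. i < P \<Longrightarrow> z (a + i) = 0"
    and k: "k < a"
  shows "lex_less ((shift ^^ k) z) D"
proof -
  define n where "n = a - k"
  have ka: "k + n = a" "n \<ge> 1" using k by (auto simp: n_def)
  have ady': "\<not> (\<exists>m. (\<forall>i<m. D i = y (i + k)) \<and> D m < y (m + k))"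
    using ady[of k] unfolding lex_less_def shift_pow by simp
  show ?thesis
  proof (cases "\<exists>i<n. y (k + i) \<noteq> D i")
    case True
    then obtain i0 where "i0 < n \<and> y (k + i0) \<noteq> D i0" by blast
    from least_ex[of "\<lambda>i. i < n \<and> y (k + i) \<noteq> D i", OF this]
    obtain i where i: "i < n" "y (k + i) \<noteq> D i" "\<forall>j<i. y (k + j) = D j"
      by (meson less_trans)
    have "\<not> D i < y (i + k)" using ady' i(3) by (metis add.commute)
    hence lt: "y (k + i) < D i" using i(2) by (simp add: add.commute)
    show ?thesis unfolding lex_less_def shift_pow
    proof (intro exI[of _ i] conjI allI impI)
      fix j assume "j < i"
      thus "z (j + k) = D j" using i zy[of "j+k"] ka by (simp add: add.commute)
    next
      show "z (i + k) < D i" using lt zy[of "i+k"] i ka by (simp add: add.commute)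
    qed
  next
    case False
    hence tie: "\<And>i. i < n \<Longrightarrow> y (k + i) = D i" by auto
    have "y k \<noteq> 0" using tie[of 0] ka D0 by simp
    then obtain j where "j < P" "y (a + j) \<noteq> 0" using periodic_nonzero[OF per] by blast
    from least_ex[of "\<lambda>j. y (a + j) \<noteq> 0", OF this(2)]
    obtain j0 where j0': "y (a + j0) \<noteq> 0" "\<forall>j<j0. y (a + j) = 0" by blast
    have "j0 < P" using j0' \<open>j < P\<close> \<open>y (a + j) \<noteq> 0\<close> by (meson not_less le_less_trans)
    note j0 = this j0'
    have "\<exists>i\<le>j0. D (n + i) \<noteq> 0"
    proof (rule ccontr)
      assume "\<not> ?thesis"
      hence Dz: "\<And>i. i \<le> j0 \<Longrightarrow> D (n + i) = 0" by auto
      have "(\<forall>i<n + j0. D i = y (i + k)) \<and> D (n + j0) < y (n + j0 + k)"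
      proof (intro conjI allI impI)
        fix i assume "i < n + j0"
        show "D i = y (i + k)"
        proof (cases "i < n")
          case True then show ?thesis using tie[of i] by (simp add: add.commute)
        next
          case False
          then obtain r where r: "i = n + r" "r < j0" using \<open>i < n + j0\<close>
            by (metis add_less_cancel_left le_add_diff_inverse not_less)
          have "i + k = a + r" using r ka by simp
          hence "y (i + k) = y (a + r)" by simp
          then show ?thesis using Dz[of r] j0(3) r by simp
        qed
      next
        have "y (n + j0 + k) = y (a + j0)" using ka by (simp add: algebra_simps)
        then show "D (n + j0) < y (n + j0 + k)" using Dz[of j0] j0(2) by simp
      qed
      then show False using ady' by blast
    qed
    then obtain i1 where i1: "i1 \<le> j0" "D (n + i1) \<noteq> 0" by blast
    from least_ex[of "\<lambda>i. D (n + i) \<noteq> 0", OF i1(2)]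
    obtain i where i': "D (n + i) \<noteq> 0" "\<forall>j<i. D (n + j) = 0" by blast
    have "i \<le> i1" using i' i1 by (meson not_le)
    note i = order.trans[OF this i1(1)] i'
    show ?thesis unfolding lex_less_def shift_pow
    proof (intro exI[of _ "n + i"] conjI allI impI)
      fix j assume jl: "j < n + i"
      show "z (j + k) = D j"
      proof (cases "j < n")
        case True then show ?thesis using tie[of j] zy[of "j+k"] ka by (simp add: add.commute)
      next
        case False
        then obtain r where r: "j = n + r" "r < i" using jl
          by (metis add_less_cancel_left le_add_diff_inverse not_less)
        have "j + k = a + r" using r ka by simp
        hence "z (j + k) = z (a + r)" by simp
        also have "\<dots> = 0" using z0[of r] r i j0 by simp
        finally show ?thesis using i(3) r by simp
      qed
    next
      have "z (n + i + k) = z (a + i)" using ka by (simp add: algebra_simps)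
      also have "\<dots> = 0" using z0[of i] i j0 by simp
      finally show "z (n + i + k) < D (n + i)" using i(2) by simp
    qed
  qed
qed


lemma zero_lex:
  assumes "z k = 0" "D 0 \<ge> (1::nat)"
  shows "lex_less ((shift ^^ k) z) D"
  unfolding lex_less_def shift_pow using assms by (intro exI[of _ 0]) simp

lemma exists_K: "(eps::real) > 0 \<Longrightarrow> \<exists>K::nat. 2 powr - real K < eps"
proof -
  assume "eps > 0"
  from real_arch_pow_inv[OF this, of "1/2"] obtain n where "(1/2::real) ^ n < eps" by auto
  moreover have "2 powr - real n = (1/2::real) ^ n"
    by (simp add: powr_minus powr_realpow power_one_over inverse_eq_divide)
  ultimately show ?thesis by metis
qed

theorem proposition5p11:
  fixes \<beta> :: real
  assumes "\<beta> > 1"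
  shows "strongly_linkable (per_points (beta_shift \<beta>))"
  unfolding strongly_linkable_def
proof (intro ballI allI impI)
  define D where "D = beta_exp1_hat \<beta>"
  have D0: "D 0 \<ge> 1" using D0_pos[OF assms] D_def by simp
  fix y1 y2 and eps :: real
  assume y1: "y1 \<in> per_points (beta_shift \<beta>)" and y2: "y2 \<in> per_points (beta_shift \<beta>)"
    and eps: "eps > 0"
  obtain P1 where P1: "P1 > 0" "(shift ^^ P1) y1 = y1" and y1X: "y1 \<in> beta_shift \<beta>"
    using y1 unfolding per_points_def by blast
  obtain P2 where P2: "P2 > 0" "(shift ^^ P2) y2 = y2" and y2X: "y2 \<in> beta_shift \<beta>"
    using y2 unfolding per_points_def by blast
  obtain K :: nat where K: "2 powr - real K < eps" using exists_K[OF eps] by blast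
  define N where "N = nat \<lceil>real (K + P1 + P2) / eps\<rceil>"
  show "\<exists>N. \<forall>p1 p2. N \<le> p1 \<and> N \<le> p2 \<and> (shift ^^ p1) y1 = y1 \<and> (shift ^^ p2) y2 = y2 \<longrightarrow>
          (\<exists>z\<in>per_points (beta_shift \<beta>). \<exists>q1 q2. q1 \<le> q2 \<and> (shift ^^ q2) z = z \<and>
            p1 \<le> q1 \<and> real q1 \<le> (1 + eps) * real p1 \<and> z \<in> bowen_ball y1 p1 eps \<and>
            p2 \<le> q2 - q1 \<and> real (q2 - q1) \<le> (1 + eps) * real p2 \<and>
            (shift ^^ q1) z \<in> bowen_ball y2 p2 eps)"
  proof (intro exI[of _ N] allI impI)
    fix p1 p2 :: nat
    assume hp: "N \<le> p1 \<and> N \<le> p2 \<and> (shift ^^ p1) y1 = y1 \<and> (shift ^^ p2) y2 = y2"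
    have Nbd: "real (K + P1 + P2) / eps \<le> real N" unfolding N_def by linarith
    have bp1: "real (K + P1 + P2) \<le> eps * real p1"
    proof -
      have "real (K + P1 + P2) / eps \<le> real p1" using Nbd hp by linarith
      thus ?thesis using eps by (simp add: pos_divide_le_eq mult.commute)
    qed
    have bp2: "real (K + P1 + P2) \<le> eps * real p2"
    proof -
      have "real (K + P1 + P2) / eps \<le> real p2" using Nbd hp by linarith
      thus ?thesis using eps by (simp add: pos_divide_le_eq mult.commute)
    qed
    define a where "a = p1 + K"
    define b where "b = p2 + K"
    define Q where "Q = a + P1 + b + P2"
    define w where "w t = (if t < a then y1 t else if t < a + P1 then 0
        else if t < a + P1 + b then y2 (t - (a + P1)) else 0)" for t
    define z where "z i = w (i mod Q)" for i
    have Qpos: "Q > 0" using P1 by (simp add: Q_def)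
    have zlt: "\<And>i. i < Q \<Longrightarrow> z i = w i" by (simp add: z_def)
    have z1: "\<And>i. i < a \<Longrightarrow> z i = y1 i" using zlt by (simp add: w_def Q_def)
    have zg: "\<And>i. i < P1 \<Longrightarrow> z (a + i) = 0" using zlt by (simp add: w_def Q_def)
    have z2: "\<And>i. i < b \<Longrightarrow> z (i + (a + P1)) = y2 i" using zlt by (simp add: w_def Q_def)
    have zh: "\<And>i. i < P2 \<Longrightarrow> z (b + i + (a + P1)) = 0" using zlt by (simp add: w_def Q_def)
    have zQ: "(shift ^^ Q) z = z" unfolding shift_pow by (rule ext) (simp add: z_def)
    have zshift: "(shift ^^ k) z = (shift ^^ (k mod Q)) z" for k
      unfolding shift_pow by (rule ext) (simp add: z_def mod_add_right_eq)
    have y1D: "\<And>k. \<not> lex_less D ((shift ^^ k) y1)" using closure_props(1)[OF y1X] D_def by simp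
    have y2D: "\<And>k. \<not> lex_less D ((shift ^^ k) y2)" using closure_props(1)[OF y2X] D_def by simp
    define z' where "z' = (shift ^^ (a + P1)) z"
    have z'2: "\<And>i. i < b \<Longrightarrow> z' i = y2 i" using z2 by (simp add: z'_def shift_pow)
    have z'h: "\<And>i. i < P2 \<Longrightarrow> z' (b + i) = 0" using zh by (simp add: z'_def shift_pow)
    have lexz: "lex_less ((shift ^^ k) z) D" for k
    proof -
      define t where "t = k mod Q"
      have tQ: "t < Q" using Qpos by (simp add: t_def)
      have "lex_less ((shift ^^ t) z) D"
      proof (cases "t < a")
        case True
        show ?thesis by (rule block_lex[OF D0 y1D P1(2) P1(1) z1 zg True])
      next
        case ta: False
        show ?thesis
        proof (cases "t < a + P1")
          case True
          have "z t = 0" using zg[of "t - a"] ta True by simp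
          then show ?thesis using zero_lex D0 by blast
        next
          case tb: False
          show ?thesis
          proof (cases "t < a + P1 + b")
            case tc: True
            have "t - (a + P1) < b" using tc tb by linarith
            hence "lex_less ((shift ^^ (t - (a + P1))) z') D"
              using block_lex[where a=b, OF D0 y2D P2(2) P2(1) z'2 z'h] by blast
            moreover have "(shift ^^ (t - (a + P1))) z' = (shift ^^ t) z"
              using tb unfolding z'_def shift_pow by (intro ext) simp
            ultimately show ?thesis by simp
          next
            case False
            have "z t = 0" using zlt[OF tQ] False tb by (simp add: w_def)
            then show ?thesis using zero_lex D0 by blast
          qed
        qed
      qed
      then show ?thesis using zshift[of k] t_def by simp
    qed
    have zbd: "z i \<le> nat \<lfloor>\<beta>\<rfloor>" for i
      unfolding z_def w_def using closure_props(2)[OF y1X] closure_props(2)[OF y2X] by simp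
    have zbase: "z \<in> beta_shift_base \<beta>"
      unfolding beta_shift_base_def using zbd lexz D_def by simp
    have zX: "z \<in> beta_shift \<beta>" unfolding beta_shift_def
      using zbase by (intro CollectI allI impI bexI[of _ z]) (auto simp: rho_def)
    have zP: "z \<in> per_points (beta_shift \<beta>)"
      unfolding per_points_def using zX zQ Qpos by blast
    have ball1: "z \<in> bowen_ball y1 p1 eps"
      unfolding bowen_ball_def
    proof (intro CollectI allI impI)
      fix j assume "j < p1"
      show "rho ((shift ^^ j) z) ((shift ^^ j) y1) < eps"
        by (rule rho_small[OF _ K]) (use \<open>j < p1\<close> z1 in \<open>auto simp: shift_pow a_def\<close>)
    qed
    have ball2: "(shift ^^ (a + P1)) z \<in> bowen_ball y2 p2 eps"
      unfolding bowen_ball_def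
    proof (intro CollectI allI impI)
      fix j assume "j < p2"
      have "\<forall>i\<le>K. z (i + j + (a + P1)) = y2 (i + j)"
        using \<open>j < p2\<close> z2 by (auto simp: b_def)
      then show "rho ((shift ^^ j) ((shift ^^ (a + P1)) z)) ((shift ^^ j) y2) < eps"
        by (intro rho_small[OF _ K]) (simp add: shift_pow add.assoc)
    qed
    show "\<exists>z\<in>per_points (beta_shift \<beta>). \<exists>q1 q2. q1 \<le> q2 \<and> (shift ^^ q2) z = z \<and>
            p1 \<le> q1 \<and> real q1 \<le> (1 + eps) * real p1 \<and> z \<in> bowen_ball y1 p1 eps \<and>
            p2 \<le> q2 - q1 \<and> real (q2 - q1) \<le> (1 + eps) * real p2 \<and>
            (shift ^^ q1) z \<in> bowen_ball y2 p2 eps"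
    proof -
      have f1: "real (a + P1) \<le> (1 + eps) * real p1" using bp1 by (simp add: a_def algebra_simps)
      have f2: "real (Q - (a + P1)) \<le> (1 + eps) * real p2" using bp2 by (simp add: Q_def b_def algebra_simps)
      have f3: "a + P1 \<le> Q" by (simp add: Q_def)
      have f4: "p1 \<le> a + P1" by (simp add: a_def)
      have f5: "p2 \<le> Q - (a + P1)" by (simp add: Q_def b_def)
      show ?thesis
        apply (rule bexI[OF _ zP])
        apply (rule exI[of _ "a + P1"])
        apply (rule exI[of _ Q])
        using f1 f2 f3 f4 f5 zQ ball1 ball2 by blast
    qed
  qed
qed

end
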